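(* The regular module $\mathbb{M}_2$ is injective as a bigraded $\mathbb{M}_2$-module (in the category of bigraded $\mathbb{M}_2$-modules and bidegree-preserving homomorphisms).
   Context: $\mathbb{M}_2$ is the bigraded commutative $\mathbb{F}_2$-algebra with $\mathbb{F}_2$-basis the elements $\rho^m\tau^n$ ($m,n\ge0$) in bidegree $(m,m+n)$ and $\frac{\theta}{\rho^m\tau^n}$ ($m,n\ge 0$) in bidegree $(-m,-2-m-n)$; multiplication: $\rho^a\tau^b\cdot\rho^c\tau^d=\rho^{a+c}\tau^{b+d}$, $\rho^a\tau^b\cdot\frac{\theta}{\rho^c\tau^d}=\frac{\theta}{\rho^{c-a}\tau^{d-b}}$ if $a\le c,b\le d$ and $0$ otherwise, and the product of two elements of the form $\frac{\theta}{\rho^c\tau^d}$ is $0$. (It is $H^{*,*}(pt;\underline{\mathbb{F}_2})$.) *)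

theory Defs
  imports Main
begin

text \<open>F_2-basis of M_2: RT m n stands for rho^m tau^n, Th m n stands for theta/(rho^m tau^n).\<close>
datatype m2b = RT nat nat | Th nat nat

fun m2deg :: "m2b \<Rightarrow> int \<times> int" where
  "m2deg (RT m n) = (int m, int m + int n)"
| "m2deg (Th m n) = (- int m, -2 - int m - int n)"

text \<open>Product of basis elements (None means the product is 0).\<close>
fun m2mult :: "m2b \<Rightarrow> m2b \<Rightarrow> m2b option" where
  "m2mult (RT a b) (RT c d) = Some (RT (a + c) (b + d))"
| "m2mult (RT a b) (Th c d) = (if a \<le> c \<and> b \<le> d then Some (Th (c - a) (d - b)) else None)"
| "m2mult (Th c d) (RT a b) = (if a \<le> c \<and> b \<le> d then Some (Th (c - a) (d - b)) else None)"
| "m2mult (Th _ _) (Th _ _) = None"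

text \<open>Elements of M_2 are F_2-linear combinations of basis elements, i.e. finite sets of
  basis elements; addition is symmetric difference and multiplication is the bilinear
  extension of m2mult (coefficients mod 2).\<close>
definition m2plus :: "m2b set \<Rightarrow> m2b set \<Rightarrow> m2b set" where
  "m2plus x y = (x - y) \<union> (y - x)"

definition m2times :: "m2b set \<Rightarrow> m2b set \<Rightarrow> m2b set" where
  "m2times x y = {c. odd (card {(s, t). s \<in> x \<and> t \<in> y \<and> m2mult s t = Some c})}"

definition dshift :: "int \<times> int \<Rightarrow> int \<times> int \<Rightarrow> int \<times> int" where
  "dshift d e = (fst d + fst e, snd d + snd e)"

text \<open>A bigraded M_2-module M = \<oplus>_{d} M_d is given by the family of its homogeneous
  components: bcar M d is the F_2-vector space M_d (with addition badd M d and zero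
  bzero M d), and bact M b d : M_d \<rightarrow> M_{d + |b|} is the action of the basis element b.\<close>
record 'a bgmod =
  bcar  :: "int \<times> int \<Rightarrow> 'a set"
  badd  :: "int \<times> int \<Rightarrow> 'a \<Rightarrow> 'a \<Rightarrow> 'a"
  bzero :: "int \<times> int \<Rightarrow> 'a"
  bact  :: "m2b \<Rightarrow> int \<times> int \<Rightarrow> 'a \<Rightarrow> 'a"

definition bigraded_M2_module :: "'a bgmod \<Rightarrow> bool" where
  "bigraded_M2_module M \<longleftrightarrow>
     (\<forall>d. bzero M d \<in> bcar M d
        \<and> (\<forall>x\<in>bcar M d. \<forall>y\<in>bcar M d. badd M d x y \<in> bcar M d)
        \<and> (\<forall>x\<in>bcar M d. \<forall>y\<in>bcar M d. \<forall>z\<in>bcar M d.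
              badd M d (badd M d x y) z = badd M d x (badd M d y z))
        \<and> (\<forall>x\<in>bcar M d. \<forall>y\<in>bcar M d. badd M d x y = badd M d y x)
        \<and> (\<forall>x\<in>bcar M d. badd M d (bzero M d) x = x)
        \<and> (\<forall>x\<in>bcar M d. badd M d x x = bzero M d)
        \<and> (\<forall>b. \<forall>x\<in>bcar M d. bact M b d x \<in> bcar M (dshift d (m2deg b)))
        \<and> (\<forall>b. \<forall>x\<in>bcar M d. \<forall>y\<in>bcar M d.
              bact M b d (badd M d x y)
              = badd M (dshift d (m2deg b)) (bact M b d x) (bact M b d y))
        \<and> (\<forall>x\<in>bcar M d. bact M (RT 0 0) d x = x)
        \<and> (\<forall>b c. \<forall>x\<in>bcar M d.
              bact M b (dshift d (m2deg c)) (bact M c d x)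
              = (case m2mult b c of
                   None \<Rightarrow> bzero M (dshift (dshift d (m2deg c)) (m2deg b))
                 | Some e \<Rightarrow> bact M e d x)))"

definition bg_hom :: "'a bgmod \<Rightarrow> 'b bgmod \<Rightarrow> (int \<times> int \<Rightarrow> 'a \<Rightarrow> 'b) \<Rightarrow> bool" where
  "bg_hom M N f \<longleftrightarrow>
     (\<forall>d. (\<forall>x\<in>bcar M d. f d x \<in> bcar N d)
        \<and> (\<forall>x\<in>bcar M d. \<forall>y\<in>bcar M d. f d (badd M d x y) = badd N d (f d x) (f d y))
        \<and> (\<forall>b. \<forall>x\<in>bcar M d. f (dshift d (m2deg b)) (bact M b d x) = bact N b d (f d x)))"

definition bg_mono :: "'a bgmod \<Rightarrow> 'b bgmod \<Rightarrow> (int \<times> int \<Rightarrow> 'a \<Rightarrow> 'b) \<Rightarrow> bool" where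
  "bg_mono M N f \<longleftrightarrow> bg_hom M N f \<and> (\<forall>d. inj_on (f d) (bcar M d))"

definition M2reg :: "m2b set bgmod" where
  "M2reg = \<lparr> bcar = (\<lambda>d. {x. x \<subseteq> {b. m2deg b = d}}),
             badd = (\<lambda>d. m2plus),
             bzero = (\<lambda>d. {}),
             bact = (\<lambda>b d x. m2times {b} x) \<rparr>"

definition bg_injective :: "'c bgmod \<Rightarrow> 'a itself \<Rightarrow> 'b itself \<Rightarrow> bool" where
  "bg_injective Q (TYPE('a)) (TYPE('b)) \<longleftrightarrow>
     (\<forall>(A :: 'a bgmod) (B :: 'b bgmod) i f.
        bigraded_M2_module A \<longrightarrow> bigraded_M2_module B \<longrightarrow>
        bg_mono A B i \<longrightarrow> bg_hom A Q f \<longrightarrow>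
        (\<exists>g. bg_hom B Q g \<and> (\<forall>d. \<forall>x\<in>bcar A d. g d (i d x) = f d x)))"

end

theory Submission
  imports Defs
begin

fun dual :: "m2b \<Rightarrow> m2b" where
  "dual (RT m n) = Th m n" | "dual (Th m n) = RT m n"

lemma dual_dual[simp]: "dual (dual b) = b" by (cases b) auto

lemma deg_inj: "m2deg s = m2deg t \<Longrightarrow> s = t"
  by (cases s; cases t) auto

lemma mult_deg: "m2mult s t = Some e \<Longrightarrow> m2deg e = dshift (m2deg s) (m2deg t)"
  by (cases s; cases t) (auto simp: dshift_def split: if_splits)

lemma dual_deg_eq: "m2deg (dual b) = (- fst (m2deg b), -2 - snd (m2deg b))"
  by (cases b) auto

lemma dual_shift[simp]: "m2deg b = d \<Longrightarrow> dshift d (m2deg (dual b)) = (0,-2)"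
  by (cases b) (auto simp: dshift_def)

lemma L: "m2mult (dual b) c = Some (dual t) \<longleftrightarrow> m2mult c t = Some b"
  by (cases b; cases c; cases t) (auto split: if_splits)

lemma Lth: "m2mult (dual b) t = Some (Th 0 0) \<longleftrightarrow> t = b"
  by (cases b; cases t) (auto split: if_splits)

lemma mult_inj: "m2mult c t = Some e \<Longrightarrow> m2mult c t' = Some e \<Longrightarrow> t = t'"
  by (cases c; cases t; cases t') (auto split: if_splits)

lemma mult_assoc:
  "(\<exists>t. m2mult c s = Some t \<and> m2mult b t = Some e) \<longleftrightarrow>
   (\<exists>u. m2mult b c = Some u \<and> m2mult u s = Some e)"
  by (cases b; cases c; cases s) (auto split: if_splits)

lemma m2times_single: "m2times {c} X = {e. \<exists>t\<in>X. m2mult c t = Some e}"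
proof -
  have "odd (card {(s, t). s \<in> {c} \<and> t \<in> X \<and> m2mult s t = Some e}) \<longleftrightarrow> (\<exists>t\<in>X. m2mult c t = Some e)" for e
  proof (cases "\<exists>t\<in>X. m2mult c t = Some e")
    case True
    then obtain t where t: "t \<in> X" "m2mult c t = Some e" by blast
    have "{(s, t). s \<in> {c} \<and> t \<in> X \<and> m2mult s t = Some e} = {(c,t)}"
      using t mult_inj by auto
    then show ?thesis using True by simp
  next
    case False
    then have eq: "{(s, t). s \<in> {c} \<and> t \<in> X \<and> m2mult s t = Some e} = {}" by auto
    show ?thesis unfolding eq using False by simp
  qed
  then show ?thesis unfolding m2times_def by auto
qed

lemma r00: "m2mult (RT 0 0) t = Some t" by (cases t) auto

lemma module: "bigraded_M2_module M2reg"
  unfolding bigraded_M2_module_def M2reg_def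
  apply (simp add: m2times_single)
  apply (intro allI conjI)
  apply (auto simp: m2plus_def r00 dshift_def m2times_single dest: mult_inj split: option.splits)
  subgoal for a b ba x xa t using mult_deg[of ba t xa] by (auto simp: dshift_def)
  subgoal for a b ba c x xa t ta using mult_assoc[of c ta ba xa] by auto
  subgoal for a b ba c x x2 xa t ta using mult_assoc[of c ta ba xa] by auto
  subgoal for a b ba c x x2 xa t using mult_assoc[of c t ba xa] by auto
  done

lemma ext_functional:
  fixes add :: "'b \<Rightarrow> 'b \<Rightarrow> 'b" and addW :: "'a \<Rightarrow> 'a \<Rightarrow> 'a" and \<mu> :: "'a \<Rightarrow> bool"
  assumes zV: "z \<in> V" and clV: "\<forall>x\<in>V. \<forall>y\<in>V. add x y \<in> V"
   and asV: "\<forall>x\<in>V. \<forall>y\<in>V. \<forall>w\<in>V. add (add x y) w = add x (add y w)"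
   and coV: "\<forall>x\<in>V. \<forall>y\<in>V. add x y = add y x"
   and zlV: "\<forall>x\<in>V. add z x = x" and ivV: "\<forall>x\<in>V. add x x = z"
   and aW: "azero \<in> W" and clW: "\<forall>x\<in>W. \<forall>y\<in>W. addW x y \<in> W"
   and jV: "\<forall>x\<in>W. j x \<in> V" and jadd: "\<forall>x\<in>W. \<forall>y\<in>W. j (addW x y) = add (j x) (j y)"
   and jinj: "inj_on j W"
   and madd: "\<forall>x\<in>W. \<forall>y\<in>W. \<mu> (addW x y) = (\<mu> x \<noteq> \<mu> y)"
  shows "\<exists>\<Lambda>. (\<forall>x\<in>V. \<forall>y\<in>V. \<Lambda> (add x y) = (\<Lambda> x \<noteq> \<Lambda> y)) \<and> (\<forall>a\<in>W. \<Lambda> (j a) = \<mu> a)"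
proof -
  define adm where "adm G \<longleftrightarrow> G \<subseteq> V \<times> UNIV \<and> (\<forall>x p q. (x,p)\<in>G \<longrightarrow> (x,q)\<in>G \<longrightarrow> p=q)
      \<and> (\<forall>a\<in>W. (j a, \<mu> a) \<in> G) \<and> (\<forall>x p y q. (x,p)\<in>G \<longrightarrow> (y,q)\<in>G \<longrightarrow> (add x y, p\<noteq>q)\<in>G)" for G
  define AA where "AA = {G. adm G}"
  have admF: "p = q" if "adm G" "(x,p)\<in>G" "(x,q)\<in>G" for G x p q using that unfolding adm_def by blast
  have admA: "(add x y, p\<noteq>q)\<in>G" if "adm G" "(x,p)\<in>G" "(y,q)\<in>G" for G x p y q using that unfolding adm_def by blast
  have admW: "(j a, \<mu> a)\<in>G" if "adm G" "a \<in> W" for G a using that unfolding adm_def by blast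
  have admV: "x \<in> V" if "adm G" "(x,p)\<in>G" for G x p using that unfolding adm_def by blast
  define G0 where "G0 = {(j a, \<mu> a) | a. a\<in>W}"
  have G0: "adm G0"
    unfolding adm_def G0_def
  proof (intro conjI allI impI)
    show "{(j a, \<mu> a) |a. a \<in> W} \<subseteq> V \<times> UNIV" using jV by auto
    show "p = q" if "(x, p) \<in> {(j a, \<mu> a) |a. a \<in> W}" "(x, q) \<in> {(j a, \<mu> a) |a. a \<in> W}" for x p q
      using that jinj by (auto dest: inj_onD)
    show "\<forall>a\<in>W. (j a, \<mu> a) \<in> {(j a, \<mu> a) |a. a \<in> W}" by auto
    show "(add x y, p \<noteq> q) \<in> {(j a, \<mu> a) |a. a \<in> W}"
      if h: "(x, p) \<in> {(j a, \<mu> a) |a. a \<in> W}" "(y, q) \<in> {(j a, \<mu> a) |a. a \<in> W}" for x p y q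
    proof -
      obtain a b where ab: "a \<in> W" "b \<in> W" "x = j a" "p = \<mu> a" "y = j b" "q = \<mu> b" using h by blast
      then have "(add x y, p \<noteq> q) = (j (addW a b), \<mu> (addW a b))" using jadd madd by auto
      then show ?thesis using clW ab by blast
    qed
  qed
  have "\<forall>C\<in>chains AA. \<exists>U\<in>AA. \<forall>X\<in>C. X \<subseteq> U"
  proof
    fix C assume C: "C \<in> chains AA"
    show "\<exists>U\<in>AA. \<forall>X\<in>C. X \<subseteq> U"
    proof (cases "C = {}")
      case True then show ?thesis using G0 AA_def by auto
    next
      case False
      have CA: "\<And>G. G \<in> C \<Longrightarrow> adm G" using C by (auto simp: chains_def AA_def)
      have ch: "\<And>G H. G \<in> C \<Longrightarrow> H \<in> C \<Longrightarrow> G \<subseteq> H \<or> H \<subseteq> G"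
        using C by (auto simp: chains_def chain_subset_def)
      obtain G1 where G1: "G1 \<in> C" using False by auto
      have "adm (\<Union>C)"
        unfolding adm_def
      proof (intro conjI allI impI)
        show "\<Union>C \<subseteq> V \<times> UNIV"
        proof (intro subsetI)
          fix w assume "w \<in> \<Union>C"
          then obtain G where G: "G \<in> C" "w \<in> G" by blast
          obtain x p where w: "w = (x,p)" by (cases w)
          show "w \<in> V \<times> UNIV" using admV[OF CA[OF G(1)], of x p] G(2) w by simp
        qed
        show "p = q" if h: "(x, p) \<in> \<Union>C" "(x, q) \<in> \<Union>C" for x p q
        proof -
          obtain G H where GH: "G \<in> C" "H \<in> C" "(x,p) \<in> G" "(x,q) \<in> H" using h by auto
          show ?thesis
          proof (cases "G \<subseteq> H")
            case True then show ?thesis using GH CA[of H] admF[of H x p q] by blast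
          next
            case False then have "H \<subseteq> G" using ch GH by blast
            then show ?thesis using GH CA[of G] admF[of G x p q] by blast
          qed
        qed
        show "\<forall>a\<in>W. (j a, \<mu> a) \<in> \<Union>C" using G1 admW[OF CA[OF G1]] by blast
        show "(add x y, p \<noteq> q) \<in> \<Union>C" if h: "(x, p) \<in> \<Union>C" "(y, q) \<in> \<Union>C" for x p y q
        proof -
          obtain G H where GH: "G \<in> C" "H \<in> C" "(x,p) \<in> G" "(y,q) \<in> H" using h by auto
          show ?thesis
          proof (cases "G \<subseteq> H")
            case True then show ?thesis using GH CA[of H] admA[of H x p y q] by blast
          next
            case False then have "H \<subseteq> G" using ch GH by blast
            then show ?thesis using GH CA[of G] admA[of G x p y q] by blast
          qed
        qed
      qed
      then show ?thesis unfolding AA_def by blast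
    qed
  qed
  from Zorn_Lemma2[OF this] obtain M where MA: "M \<in> AA" and Mmax: "\<forall>X\<in>AA. M \<subseteq> X \<longrightarrow> X = M" by blast
  have M: "adm M" using MA AA_def by auto
  have zM: "(z, False) \<in> M"
  proof -
    have "(j azero, \<mu> azero) \<in> M" using M aW admW by blast
    then have "(add (j azero) (j azero), \<mu> azero \<noteq> \<mu> azero) \<in> M" using admA[OF M] by blast
    then have "(add (j azero) (j azero), False) \<in> M" by simp
    then show ?thesis using ivV jV aW by auto
  qed
  have dom: "\<exists>p. (v,p) \<in> M" if vV: "v \<in> V" for v
  proof (rule ccontr)
    assume nv: "\<nexists>p. (v, p) \<in> M"
    define M' where "M' = M \<union> {(add v x, p) | x p. (x,p) \<in> M}"
    have MV: "\<And>x p. (x,p) \<in> M \<Longrightarrow> x \<in> V" using M admV by blast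
    have canc: "x = y" if "x \<in> V" "y \<in> V" "add v x = add v y" for x y
    proof -
      have "add v (add v x) = add v (add v y)" using that by simp
      moreover have "add v (add v x) = x" using asV[rule_format, of v v x] ivV zlV vV that(1) by simp
      moreover have "add v (add v y) = y" using asV[rule_format, of v v y] ivV zlV vV that(2) by simp
      ultimately show ?thesis by simp
    qed
    have "adm M'"
      unfolding adm_def
    proof (intro conjI allI impI)
      show "M' \<subseteq> V \<times> UNIV" unfolding M'_def using MV clV vV by auto
      show "p = q" if h: "(x, p) \<in> M'" "(x, q) \<in> M'" for x p q
      proof -
        have fM: "\<And>x p q. (x,p)\<in>M \<Longrightarrow> (x,q)\<in>M \<Longrightarrow> p=q" using M admF by blast
        have mix: False if "(x,p) \<in> M" "(y,q) \<in> M" "x = add v y" for x p y q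
        proof -
          have "(add x y, p \<noteq> q) \<in> M" using admA[OF M that(1,2)] .
          moreover have "add x y = v"
          proof -
            have yV: "y \<in> V" using MV that by blast
            have "add x y = add v (add y y)" using that(3) asV[rule_format, of v y y] yV vV by simp
            also have "\<dots> = v" using ivV yV zlV vV coV[rule_format, of v z] zV by simp
            finally show ?thesis .
          qed
          ultimately show False using nv by auto
        qed
        consider "(x,p) \<in> M" "(x,q) \<in> M"
          | y' where "(x,p) \<in> M" "(y',q) \<in> M" "x = add v y'"
          | x' where "(x',p) \<in> M" "x = add v x'" "(x,q) \<in> M"
          | x' y' where "(x',p) \<in> M" "x = add v x'" "(y',q) \<in> M" "x = add v y'"
          using h unfolding M'_def by blast
        then show ?thesis
        proof cases
          case 1 then show ?thesis using fM by blast
        next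
          case (2 y') then show ?thesis using mix[of x p y' q] by blast
        next
          case (3 x') then show ?thesis using mix[of x q x' p] by blast
        next
          case (4 x' y')
          then have "x' = y'" using canc[of x' y'] MV by metis
          then show ?thesis using 4 fM by blast
        qed
      qed
      show "\<forall>a\<in>W. (j a, \<mu> a) \<in> M'" using M admW unfolding M'_def by blast
      show "(add x y, p \<noteq> q) \<in> M'" if h: "(x, p) \<in> M'" "(y, q) \<in> M'" for x p y q
      proof -
        have aM: "\<And>x p y q. (x,p)\<in>M \<Longrightarrow> (y,q)\<in>M \<Longrightarrow> (add x y, p\<noteq>q)\<in>M" using admA[OF M] by blast
        consider "(x,p) \<in> M" "(y,q) \<in> M"
          | x' where "(x',p) \<in> M" "x = add v x'" "(y,q) \<in> M"
          | y' where "(x,p) \<in> M" "(y',q) \<in> M" "y = add v y'"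
          | x' y' where "(x',p) \<in> M" "x = add v x'" "(y',q) \<in> M" "y = add v y'"
          using h unfolding M'_def by blast
        then show ?thesis
        proof cases
          case 1 then show ?thesis using aM unfolding M'_def by blast
        next
          case (2 x')
          have "add x y = add v (add x' y)" using 2 asV MV vV by metis
          then show ?thesis using aM[OF 2(1) 2(3)] unfolding M'_def by blast
        next
          case (3 y')
          have "add x y = add v (add x y')"
          proof -
            have "add x (add v y') = add (add x v) y'" using 3 asV MV vV by metis
            also have "\<dots> = add (add v x) y'" using 3 coV MV vV by metis
            also have "\<dots> = add v (add x y')" using 3 asV MV vV by metis
            finally show ?thesis using 3 by simp
          qed
          then show ?thesis using aM[OF 3(1) 3(2)] unfolding M'_def by blast
        next
          case (4 x' y')
          have x'V: "x' \<in> V" and y'V: "y' \<in> V" using 4 MV by auto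
          have "add x y = add x' y'"
          proof -
            have "add (add v x') (add v y') = add v (add x' (add v y'))" using asV clV vV x'V y'V by metis
            also have "add x' (add v y') = add (add x' v) y'" using asV vV x'V y'V by metis
            also have "add x' v = add v x'" using coV vV x'V by metis
            also have "add (add v x') y' = add v (add x' y')" using asV vV x'V y'V by metis
            also have "add v (add v (add x' y')) = add (add v v) (add x' y')" using asV clV vV x'V y'V by metis
            also have "\<dots> = add x' y'" using ivV zlV clV vV x'V y'V by metis
            finally show ?thesis using 4 by simp
          qed
          then show ?thesis using aM[OF 4(1) 4(3)] unfolding M'_def by auto
        qed
      qed
    qed
    moreover have "M \<subseteq> M'" unfolding M'_def by blast
    ultimately have "M' = M" using Mmax AA_def by blast
    moreover have "(add v z, False) \<in> M'" using zM unfolding M'_def by blast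
    moreover have "add v z = v" using coV zlV vV zV by metis
    ultimately show False using nv by auto
  qed
  define \<Lambda> where "\<Lambda> x = ((x, True) \<in> M)" for x
  have fM: "\<And>x p q. (x,p)\<in>M \<Longrightarrow> (x,q)\<in>M \<Longrightarrow> p=q" using admF[OF M] by blast
  have val: "(x,p) \<in> M \<Longrightarrow> \<Lambda> x = p" for x p using fM[of x p True] unfolding \<Lambda>_def by (cases p) auto
  show ?thesis
  proof (intro exI conjI ballI)
    fix x y assume "x \<in> V" "y \<in> V"
    then obtain p q where "(x,p) \<in> M" "(y,q) \<in> M" using dom by blast
    moreover have "(add x y, p \<noteq> q) \<in> M" using admA[OF M] calculation by blast
    ultimately show "\<Lambda> (add x y) = (\<Lambda> x \<noteq> \<Lambda> y)" using val[of x p] val[of y q] val[of "add x y" "p \<noteq> q"] by simp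
  next
    fix a assume "a \<in> W"
    then show "\<Lambda> (j a) = \<mu> a" using admW[OF M] val by blast
  qed
qed


lemma modD:
  assumes "bigraded_M2_module M"
  shows mod_zero: "bzero M d \<in> bcar M d"
    and mod_addc: "\<forall>x\<in>bcar M d. \<forall>y\<in>bcar M d. badd M d x y \<in> bcar M d"
    and mod_assoc: "\<forall>x\<in>bcar M d. \<forall>y\<in>bcar M d. \<forall>z\<in>bcar M d. badd M d (badd M d x y) z = badd M d x (badd M d y z)"
    and mod_comm: "\<forall>x\<in>bcar M d. \<forall>y\<in>bcar M d. badd M d x y = badd M d y x"
    and mod_zl: "\<forall>x\<in>bcar M d. badd M d (bzero M d) x = x"
    and mod_inv: "\<forall>x\<in>bcar M d. badd M d x x = bzero M d"
    and mod_actc: "x \<in> bcar M d \<Longrightarrow> bact M b d x \<in> bcar M (dshift d (m2deg b))"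
    and mod_actadd: "x \<in> bcar M d \<Longrightarrow> y \<in> bcar M d \<Longrightarrow> bact M b d (badd M d x y) = badd M (dshift d (m2deg b)) (bact M b d x) (bact M b d y)"
    and mod_actass: "x \<in> bcar M d \<Longrightarrow> bact M b (dshift d (m2deg c)) (bact M c d x)
              = (case m2mult b c of
                   None \<Rightarrow> bzero M (dshift (dshift d (m2deg c)) (m2deg b))
                 | Some e \<Rightarrow> bact M e d x)"
  using assms[unfolded bigraded_M2_module_def, THEN spec[where x=d]] by blast+

lemma homD:
  assumes "bg_hom M N f"
  shows hom_c: "x \<in> bcar M d \<Longrightarrow> f d x \<in> bcar N d"
    and hom_add: "\<forall>x\<in>bcar M d. \<forall>y\<in>bcar M d. f d (badd M d x y) = badd N d (f d x) (f d y)"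
    and hom_act: "x \<in> bcar M d \<Longrightarrow> f (dshift d (m2deg b)) (bact M b d x) = bact N b d (f d x)"
  using assms[unfolded bg_hom_def, THEN spec[where x=d]] by blast+

lemma M2reg_simps[simp]: "bcar M2reg d = {x. x \<subseteq> {b. m2deg b = d}}" "badd M2reg d = m2plus"
  "bzero M2reg d = {}" "bact M2reg b d x = m2times {b} x"
  by (simp_all add: M2reg_def)

lemma injective: "bg_injective M2reg TYPE('a) TYPE('b)"
  unfolding bg_injective_def
proof (intro allI impI)
  fix A :: "'a bgmod" and B :: "'b bgmod" and i f
  assume Am: "bigraded_M2_module A" and Bm: "bigraded_M2_module B"
    and im: "bg_mono A B i" and fh: "bg_hom A M2reg f"
  let ?o = "(0::int, -2::int)"
  have ih: "bg_hom A B i" and iinj: "\<And>d. inj_on (i d) (bcar A d)" using im unfolding bg_mono_def by auto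
  have fadd: "\<And>d x y. x \<in> bcar A d \<Longrightarrow> y \<in> bcar A d \<Longrightarrow> f d (badd A d x y) = m2plus (f d x) (f d y)"
    using hom_add[OF fh] by simp
  have fc: "\<And>d x. x \<in> bcar A d \<Longrightarrow> f d x \<subseteq> {b. m2deg b = d}"
    using hom_c[OF fh] by simp
  have fact: "\<And>d b x. x \<in> bcar A d \<Longrightarrow> f (dshift d (m2deg b)) (bact A b d x) = m2times {b} (f d x)"
    using hom_act[OF fh] by simp
  have "\<exists>\<Lambda>. (\<forall>x\<in>bcar B ?o. \<forall>y\<in>bcar B ?o. \<Lambda> (badd B ?o x y) = (\<Lambda> x \<noteq> \<Lambda> y))
          \<and> (\<forall>a\<in>bcar A ?o. \<Lambda> (i ?o a) = (Th 0 0 \<in> f ?o a))"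
  proof (rule ext_functional[where z = "bzero B ?o" and azero = "bzero A ?o" and addW = "badd A ?o"
      and V = "bcar B ?o" and add = "badd B ?o" and W = "bcar A ?o" and j = "i ?o" and \<mu> = "\<lambda>a. Th 0 0 \<in> f ?o a"])
    show "\<forall>x\<in>bcar A ?o. \<forall>y\<in>bcar A ?o. (Th 0 0 \<in> f ?o (badd A ?o x y)) = ((Th 0 0 \<in> f ?o x) \<noteq> (Th 0 0 \<in> f ?o y))"
    proof (intro ballI)
      fix x y assume x: "x \<in> bcar A ?o" and y: "y \<in> bcar A ?o"
      show "(Th 0 0 \<in> f ?o (badd A ?o x y)) = ((Th 0 0 \<in> f ?o x) \<noteq> (Th 0 0 \<in> f ?o y))"
        unfolding fadd[OF x y] m2plus_def by blast
    qed
    show "\<forall>x\<in>bcar A ?o. i ?o x \<in> bcar B ?o" using hom_c[OF ih] by blast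
  qed (fact mod_zero[OF Am] mod_zero[OF Bm] mod_addc[OF Am] mod_addc[OF Bm] mod_assoc[OF Bm]
          mod_comm[OF Bm] mod_zl[OF Bm] mod_inv[OF Bm] hom_add[OF ih] iinj)+
  then obtain \<Lambda> where Ladd0: "\<forall>x\<in>bcar B ?o. \<forall>y\<in>bcar B ?o. \<Lambda> (badd B ?o x y) = (\<Lambda> x \<noteq> \<Lambda> y)"
    and Li0: "\<forall>a\<in>bcar A ?o. \<Lambda> (i ?o a) = (Th 0 0 \<in> f ?o a)" by (elim exE conjE)
  note Ladd = Ladd0[rule_format] and Li = Li0[rule_format]
  have L0: "\<not> \<Lambda> (bzero B ?o)"
    using Ladd[of "bzero B ?o" "bzero B ?o"] mod_zero[OF Bm] mod_inv[OF Bm] by auto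
  define g where "g d y = {b. m2deg b = d \<and> \<Lambda> (bact B (dual b) d y)}" for d y
  have gh: "bg_hom B M2reg g"
    unfolding bg_hom_def M2reg_simps
  proof (intro allI conjI ballI)
    fix d x assume x: "x \<in> bcar B d"
    show "g d x \<in> {x. x \<subseteq> {b. m2deg b = d}}" unfolding g_def by auto
    fix y assume y: "y \<in> bcar B d"
    show "g d (badd B d x y) = m2plus (g d x) (g d y)"
    proof -
      have "b \<in> g d (badd B d x y) \<longleftrightarrow> b \<in> m2plus (g d x) (g d y)" for b
      proof (cases "m2deg b = d")
        case True
        have "bact B (dual b) d (badd B d x y) = badd B ?o (bact B (dual b) d x) (bact B (dual b) d y)"
          using mod_actadd[OF Bm x y, of "dual b"] True by simp
        moreover have "bact B (dual b) d x \<in> bcar B ?o" "bact B (dual b) d y \<in> bcar B ?o"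
          using mod_actc[OF Bm x, of "dual b"] mod_actc[OF Bm y, of "dual b"] True by auto
        ultimately show ?thesis using Ladd True unfolding g_def m2plus_def by auto
      qed (auto simp: g_def m2plus_def)
      then show ?thesis by blast
    qed
  next
    fix d c x assume x: "x \<in> bcar B d"
    show "g (dshift d (m2deg c)) (bact B c d x) = m2times {c} (g d x)"
    proof -
      have "e \<in> g (dshift d (m2deg c)) (bact B c d x) \<longleftrightarrow> (\<exists>t. m2deg t = d \<and> \<Lambda> (bact B (dual t) d x) \<and> m2mult c t = Some e)" for e
      proof
        assume "e \<in> g (dshift d (m2deg c)) (bact B c d x)"
        then have de: "m2deg e = dshift d (m2deg c)" and Le: "\<Lambda> (bact B (dual e) (dshift d (m2deg c)) (bact B c d x))"
          unfolding g_def by auto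
        have ass: "bact B (dual e) (dshift d (m2deg c)) (bact B c d x) = (case m2mult (dual e) c of
                   None \<Rightarrow> bzero B ?o | Some u \<Rightarrow> bact B u d x)"
          using mod_actass[OF Bm x, of "dual e" c] de by (simp split: option.splits)
        show "\<exists>t. m2deg t = d \<and> \<Lambda> (bact B (dual t) d x) \<and> m2mult c t = Some e"
        proof (cases "m2mult (dual e) c")
          case None then show ?thesis using ass Le L0 by simp
        next
          case (Some u)
          have "m2deg u = dshift (m2deg (dual e)) (m2deg c)" using mult_deg[OF Some] .
          then have "m2deg (dual u) = d" using de by (auto simp: dual_deg_eq dshift_def)
          moreover have "m2mult c (dual u) = Some e" using L[of e c "dual u"] Some by simp
          ultimately show ?thesis using ass Le Some by (intro exI[of _ "dual u"]) simp
        qed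
      next
        assume "\<exists>t. m2deg t = d \<and> \<Lambda> (bact B (dual t) d x) \<and> m2mult c t = Some e"
        then obtain t where t: "m2deg t = d" "\<Lambda> (bact B (dual t) d x)" "m2mult c t = Some e" by blast
        have de: "m2deg e = dshift d (m2deg c)" using mult_deg[OF t(3)] t(1) by (auto simp: dshift_def)
        have "m2mult (dual e) c = Some (dual t)" using L t(3) by simp
        then have "bact B (dual e) (dshift d (m2deg c)) (bact B c d x) = bact B (dual t) d x"
          using mod_actass[OF Bm x, of "dual e" c] by simp
        then show "e \<in> g (dshift d (m2deg c)) (bact B c d x)" using t de unfolding g_def by simp
      qed
      then show ?thesis unfolding m2times_single g_def by auto
    qed
  qed
  have "\<forall>d. \<forall>x\<in>bcar A d. g d (i d x) = f d x"
  proof (intro allI ballI)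
    fix d x assume x: "x \<in> bcar A d"
    have fx: "f d x \<subseteq> {b. m2deg b = d}" using fc[OF x] .
    have "b \<in> g d (i d x) \<longleftrightarrow> b \<in> f d x" for b
    proof (cases "m2deg b = d")
      case True
      have a: "bact A (dual b) d x \<in> bcar A ?o" using mod_actc[OF Am x, of "dual b"] True by simp
      have "bact B (dual b) d (i d x) = i ?o (bact A (dual b) d x)"
        using hom_act[OF ih x, of "dual b"] True by simp
      moreover have "f ?o (bact A (dual b) d x) = m2times {dual b} (f d x)"
        using fact[OF x, of "dual b"] True by simp
      ultimately have "b \<in> g d (i d x) \<longleftrightarrow> Th 0 0 \<in> m2times {dual b} (f d x)"
        unfolding g_def using Li[OF a] True by simp
      also have "\<dots> \<longleftrightarrow> b \<in> f d x" unfolding m2times_single using Lth by auto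
      finally show ?thesis .
    qed (use fx g_def in auto)
    then show "g d (i d x) = f d x" by blast
  qed
  with gh show "\<exists>g. bg_hom B M2reg g \<and> (\<forall>d. \<forall>x\<in>bcar A d. g d (i d x) = f d x)" by blast
qed

theorem proposition4p2:
  shows "bigraded_M2_module M2reg \<and> bg_injective M2reg TYPE('a) TYPE('b)"
  using module injective by blast

end
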